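(* Let $T$ be a rooted binary phylogenetic $X$-tree with $|X|=n\geq 2$. Then there exist strictly positive edge lengths $\lambda_1,\ldots,\lambda_{2n-2}$ for $T$ such that (i) the ranking $\pi_T$ is strict, and (ii) deleting the leaf $y=\arg\min_{x\in X}FP_T(x)$ yields a tree $\widetilde T=T_{\widetilde X}$ on $\widetilde X=X\setminus\{y\}$ whose ranking $\pi_{\widetilde T}$ is strict and satisfies $\arg\max_{x\in\widetilde X}FP_{\widetilde T}(x)=\arg\min_{x\in\widetilde X}FP_T(x)$; i.e. the leaf with the second lowest $FP_T$ value has the highest $FP_{\widetilde T}$ value.
   Context: A rooted binary phylogenetic $X$-tree ($X$ finite, $|X|=n$) is a rooted tree whose root $\rho$ has in-degree 0 and out-degree 2, all edges directed away from $\rho$, all other interior vertices have in-degree 1 and out-degree 2, and whose leaves are bijectively labelled by $X$ (for $|X|=1$ it may be a single vertex); it has $2n-2$ edges. Every edge $e$ has a strictly positive length $\lambda_e$. The Fair Proportion index of $x\in X$ is $FP_T(x)=\sum_{e\in P(T;\rho,x)}\lambda_e/D_e$, where $P(T;\rho,x)$ is the path from $\rho$ to $x$ and $D_e$ is the number of leaves descended from $e$. For $Y\subseteq X$, the induced subtree $T_Y$ is obtained from the minimal subtree of $T$ connecting $Y$ by suppressing all non-root vertices of in- and out-degree 1, adding the lengths of merged edges; if the root then has out-degree 1, it and its incident edge are deleted. The ranking $\pi_T$ orders $X$ by decreasing $FP_T$; it is strict if all values $FP_T(x)$ are pairwise distinct. *)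

theory Defs
  imports Complex_Main
begin

datatype 'a tree = Leaf 'a | Node "'a tree" "'a tree"

text \<open>Trees with edge lengths: WNode a l b r has an edge of length a to the
left subtree l and an edge of length b to the right subtree r.  Every edge of
the tree is exactly one such child edge, so a tree with n leaves has 2n-2 edges.\<close>
datatype 'a wtree = WLeaf 'a | WNode real "'a wtree" real "'a wtree"

fun shape :: "'a wtree \<Rightarrow> 'a tree" where
  "shape (WLeaf x) = Leaf x"
| "shape (WNode a l b r) = Node (shape l) (shape r)"

fun tleaves :: "'a tree \<Rightarrow> 'a list" where
  "tleaves (Leaf x) = [x]"
| "tleaves (Node l r) = tleaves l @ tleaves r"

fun wleaves :: "'a wtree \<Rightarrow> 'a set" where
  "wleaves (WLeaf x) = {x}"
| "wleaves (WNode a l b r) = wleaves l \<union> wleaves r"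

fun pos_lengths :: "'a wtree \<Rightarrow> bool" where
  "pos_lengths (WLeaf x) = True"
| "pos_lengths (WNode a l b r) = (a > 0 \<and> b > 0 \<and> pos_lengths l \<and> pos_lengths r)"

text \<open>Fair Proportion index: sum over the edges e on the root-to-x path of
lambda_e / D_e, with D_e the number of leaves below e.\<close>
fun FP :: "'a wtree \<Rightarrow> 'a \<Rightarrow> real" where
  "FP (WLeaf y) x = 0"
| "FP (WNode a l b r) x =
     (if x \<in> wleaves l then a / real (card (wleaves l)) + FP l x
      else if x \<in> wleaves r then b / real (card (wleaves r)) + FP r x
      else 0)"

text \<open>Induced subtree. induce_e Y a t handles the subtree t hanging below an
edge of (accumulated) length a: it returns None if t contains no leaf of Y,
otherwise the (accumulated) length of the edge above the restricted subtree
together with the restricted subtree; degree-2 vertices are suppressed by adding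
lengths of merged edges.\<close>
fun induce_e :: "'a set \<Rightarrow> real \<Rightarrow> 'a wtree \<Rightarrow> (real \<times> 'a wtree) option" where
  "induce_e Y a (WLeaf x) = (if x \<in> Y then Some (a, WLeaf x) else None)"
| "induce_e Y a (WNode b l c r) =
     (case (induce_e Y b l, induce_e Y c r) of
        (Some (b', l'), Some (c', r')) \<Rightarrow> Some (a, WNode b' l' c' r')
      | (Some (b', l'), None) \<Rightarrow> Some (a + b', l')
      | (None, Some (c', r')) \<Rightarrow> Some (a + c', r')
      | (None, None) \<Rightarrow> None)"

text \<open>T_Y: the edge accumulated above the top is discarded (this deletes the root
and its incident edge if the root has out-degree 1).\<close>
definition induce :: "'a set \<Rightarrow> 'a wtree \<Rightarrow> 'a wtree option" where
  "induce Y t = map_option snd (induce_e Y 0 t)"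

end

theory Submission imports Defs begin


lemma wleaves_finite[simp]: "finite (wleaves W)"
  by (induction W) auto

lemma wleaves_ne: "wleaves W \<noteq> {}"
  by (induction W) auto

lemma set_tleaves_shape: "set (tleaves (shape W)) = wleaves W"
  by (induction W) auto

lemma card_wleaves: "distinct (tleaves (shape W)) \<Longrightarrow> card (wleaves W) = length (tleaves (shape W))"
  by (metis distinct_card set_tleaves_shape)

lemma induce_e_cong: "Y \<inter> wleaves W = Y' \<inter> wleaves W \<Longrightarrow> induce_e Y a W = induce_e Y' a W"
proof (induction W arbitrary: a)
  case (WLeaf x) then show ?case by auto
next
  case (WNode b l c r)
  have "induce_e Y b l = induce_e Y' b l" using WNode by (intro WNode.IH) auto
  moreover have "induce_e Y c r = induce_e Y' c r" using WNode by (intro WNode.IH) auto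
  ultimately show ?case by simp
qed

lemma induce_e_all: "wleaves W \<subseteq> Y \<Longrightarrow> induce_e Y a W = Some (a, W)"
  by (induction W arbitrary: a) auto

lemma induce_e_shift: "induce_e Y a W = map_option (\<lambda>(a',W'). (a + a', W')) (induce_e Y 0 W)"
  by (cases W) (auto split: option.splits)

lemma eps_weights:
  assumes "distinct (tleaves S)" "(e::real) > 0"
  shows "\<exists>W. shape W = S \<and> pos_lengths W \<and> inj_on (FP W) (wleaves W) \<and>
            (\<forall>x\<in>wleaves W. 0 \<le> FP W x \<and> FP W x < e)"
  using assms
proof (induction S arbitrary: e)
  case (Leaf x)
  then show ?case by (intro exI[of _ "WLeaf x"]) auto
next
  case (Node l r)
  from Node.prems have dl: "distinct (tleaves l)" and dr: "distinct (tleaves r)"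
    and disj: "set (tleaves l) \<inter> set (tleaves r) = {}" by auto
  obtain Wl where Wl: "shape Wl = l" "pos_lengths Wl" "inj_on (FP Wl) (wleaves Wl)"
     "\<forall>x\<in>wleaves Wl. 0 \<le> FP Wl x \<and> FP Wl x < e/3"
    using Node.IH(1)[OF dl, of "e/3"] Node.prems by auto
  obtain Wr where Wr: "shape Wr = r" "pos_lengths Wr" "inj_on (FP Wr) (wleaves Wr)"
     "\<forall>x\<in>wleaves Wr. 0 \<le> FP Wr x \<and> FP Wr x < e/3"
    using Node.IH(2)[OF dr, of "e/3"] Node.prems by auto
  define kl where "kl = real (card (wleaves Wl))"
  define kr where "kr = real (card (wleaves Wr))"
  have klp: "kl > 0" unfolding kl_def by (simp add: card_gt_0_iff wleaves_ne)
  have krp: "kr > 0" unfolding kr_def by (simp add: card_gt_0_iff wleaves_ne)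
  have dj: "wleaves Wl \<inter> wleaves Wr = {}" using disj unfolding Wl(1)[symmetric] Wr(1)[symmetric] set_tleaves_shape .
  define W where "W = WNode (kl * (e/3)) Wl (kr * (2*e/3)) Wr"
  have fl: "\<forall>x\<in>wleaves Wl. FP W x = e/3 + FP Wl x" using klp unfolding W_def kl_def by auto
  have fr: "\<forall>x\<in>wleaves Wr. FP W x = 2*e/3 + FP Wr x" using krp dj unfolding W_def kr_def by auto
  show ?case
  proof (intro exI[of _ W] conjI)
    show "shape W = Node l r" using Wl Wr W_def by simp
    show "pos_lengths W" using Wl Wr W_def klp krp Node.prems by simp
    have lw: "wleaves W = wleaves Wl \<union> wleaves Wr" by (simp add: W_def)
    show "\<forall>x\<in>wleaves W. 0 \<le> FP W x \<and> FP W x < e"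
    proof
      fix x assume "x \<in> wleaves W"
      then consider "x \<in> wleaves Wl" | "x \<in> wleaves Wr" using lw by blast
      then show "0 \<le> FP W x \<and> FP W x < e"
      proof cases
        case 1 then show ?thesis using fl Wl(4) Node.prems by fastforce
      next
        case 2 then show ?thesis using fr Wr(4) Node.prems by fastforce
      qed
    qed
    show "inj_on (FP W) (wleaves W)"
    proof (rule inj_onI)
      fix x x' assume x: "x \<in> wleaves W" and x': "x' \<in> wleaves W" and eq: "FP W x = FP W x'"
      show "x = x'"
      proof (cases "x \<in> wleaves Wl")
        case True
        show ?thesis
        proof (cases "x' \<in> wleaves Wl")
          case True
          then show ?thesis using \<open>x \<in> wleaves Wl\<close> eq fl Wl(3) by (auto dest: inj_onD)
        next
          case False
          then have "x' \<in> wleaves Wr" using x' W_def by auto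
          then show ?thesis using \<open>x \<in> wleaves Wl\<close> eq fl fr Wl(4) Wr(4) by fastforce
        qed
      next
        case False
        then have xr: "x \<in> wleaves Wr" using x W_def by auto
        show ?thesis
        proof (cases "x' \<in> wleaves Wl")
          case True
          then show ?thesis using xr eq fl fr Wl(4) Wr(4) by fastforce
        next
          case False
          then have "x' \<in> wleaves Wr" using x' W_def by auto
          then show ?thesis using xr eq fr Wr(3) by (auto dest: inj_onD)
        qed
      qed
    qed
  qed
qed


definition Bc :: "real \<Rightarrow> real" where "Bc N = (N+3)*N + 2*N + 7"
definition Lc :: "real \<Rightarrow> real" where "Lc N = 2 * Bc N - 2*N - 6"
definition Uc :: "real \<Rightarrow> real \<Rightarrow> real" where "Uc N k = Bc N + (N+3)*(k-2) - (N-k)"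
definition Fv :: "real \<Rightarrow> 'a wtree \<Rightarrow> 'a \<Rightarrow> real" where
  "Fv a W x = a / real (card (wleaves W)) + FP W x"

definition invp :: "real \<Rightarrow> real \<Rightarrow> 'a wtree \<Rightarrow> 'a \<Rightarrow> 'a \<Rightarrow> bool" where
"invp N a W y z \<longleftrightarrow> pos_lengths W \<and> y \<in> wleaves W \<and> z \<in> wleaves W \<and> y \<noteq> z \<and>
   real (card (wleaves W)) \<le> N \<and>
 (\<exists>a' W'. induce_e (-{y}) a W = Some (a', W') \<and> wleaves W' = wleaves W - {y} \<and>
   inj_on (Fv a W) (wleaves W) \<and> inj_on (Fv a' W') (wleaves W - {y}) \<and>
   Fv a W y < Fv a W z \<and> Fv a W z < Bc N - (N - real (card (wleaves W))) \<and> Lc N + 2 \<le> Fv a' W' z \<and>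
   (\<forall>x \<in> wleaves W - {y,z}. Bc N \<le> Fv a W x \<and> Fv a W x < Uc N (real (card (wleaves W))) \<and>
        Fv a' W' x < Uc N (real (card (wleaves W)))))"

lemma inj_on_Un_less:
  assumes "inj_on f A" "inj_on f B" "\<And>a b. a\<in>A \<Longrightarrow> b\<in>B \<Longrightarrow> f a < (f b::real)"
  shows "inj_on f (A \<union> B)"
  using assms unfolding inj_on_def by (metis Un_iff less_irrefl)

lemma inj_on_shift:
  assumes "inj_on f A" "\<And>x. x\<in>A \<Longrightarrow> g x = (c::real) + f x"
  shows "inj_on g A"
  using assms unfolding inj_on_def by (metis add_left_cancel)

lemma cherry:
  assumes "y \<noteq> z" "N \<ge> 2"
  shows "invp N (Lc N) (WNode 1 (WLeaf y) 2 (WLeaf z)) y z \<and> invp N (Lc N) (WNode 2 (WLeaf z) 1 (WLeaf y)) y z"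
proof -
  have c: "card {y, z} = 2" using assms by simp
  have c2: "card {z, y} = 2" using assms by simp
  show ?thesis
    using assms unfolding invp_def
    apply (intro conjI)
    subgoal by simp
    subgoal by simp
    subgoal by simp
    subgoal by simp
    subgoal using c by simp
    subgoal
      apply (rule exI[of _ "Lc N + 2"], rule exI[of _ "WLeaf z"])
      using c by (auto simp: Fv_def Lc_def Bc_def inj_on_def)
    subgoal by simp
    subgoal by simp
    subgoal by simp
    subgoal by simp
    subgoal using c2 by (simp add: insert_commute)
    subgoal
      apply (rule exI[of _ "Lc N + 2"], rule exI[of _ "WLeaf z"])
      using c2 by (auto simp: Fv_def Lc_def Bc_def inj_on_def insert_commute)
    done
qed


lemma parent_generic:
  assumes inv: "invp N aT WT y z"
  and Hinj: "inj_on (FP WH) (wleaves WH)" and Hb: "\<forall>x\<in>wleaves WH. 0 \<le> FP WH x \<and> FP WH x < 1"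
  and disj: "wleaves WH \<inter> wleaves WT = {}"
  and bound: "real (card (wleaves WT) + card (wleaves WH)) \<le> N"
  and aP: "0 \<le> aP" "aP \<le> 1"
  and hdef: "h = real (card (wleaves WH)) * (Bc N + (N+3)*(real (card (wleaves WT)) - 2))"
  and Ppos: "pos_lengths P" and Pl: "wleaves P = wleaves WT \<union> wleaves WH"
  and PT: "\<And>x. x \<in> wleaves WT \<Longrightarrow> FP P x = Fv aT WT x"
  and PH: "\<And>x. x \<in> wleaves WH \<Longrightarrow> FP P x = h / real (card (wleaves WH)) + FP WH x"
  and Pind: "\<And>a' W'. induce_e (-{y}) aT WT = Some (a', W') \<Longrightarrow> wleaves W' = wleaves WT - {y} \<Longrightarrow>
      \<exists>P'. induce_e (-{y}) aP P = Some (aP, P') \<and> wleaves P' = wleaves W' \<union> wleaves WH \<and>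
        (\<forall>x\<in>wleaves W'. FP P' x = Fv a' W' x) \<and>
        (\<forall>x\<in>wleaves WH. FP P' x = h / real (card (wleaves WH)) + FP WH x)"
  shows "invp N aP P y z"
proof -
  from inv obtain a' W' where ind: "induce_e (-{y}) aT WT = Some (a', W')"
    and lW': "wleaves W' = wleaves WT - {y}"
    and injF: "inj_on (Fv aT WT) (wleaves WT)" and injG: "inj_on (Fv a' W') (wleaves WT - {y})"
    and yz: "Fv aT WT y < Fv aT WT z" and zB: "Fv aT WT z < Bc N - (N - real (card (wleaves WT)))"
    and Gz: "Lc N + 2 \<le> Fv a' W' z"
    and oth: "\<forall>x \<in> wleaves WT - {y,z}. Bc N \<le> Fv aT WT x \<and> Fv aT WT x < Uc N (real (card (wleaves WT))) \<and>
        Fv a' W' x < Uc N (real (card (wleaves WT)))"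
    and Tpos: "pos_lengths WT" and yT: "y \<in> wleaves WT" and zT: "z \<in> wleaves WT" and yz': "y \<noteq> z"
    unfolding invp_def by blast
  obtain P' where ind': "induce_e (-{y}) aP P = Some (aP, P')" and lP': "wleaves P' = wleaves W' \<union> wleaves WH"
    and P'T: "\<forall>x\<in>wleaves W'. FP P' x = Fv a' W' x"
    and P'H: "\<forall>x\<in>wleaves WH. FP P' x = h / real (card (wleaves WH)) + FP WH x"
    using Pind[OF ind lW'] by blast
  define k where "k = card (wleaves WT)"
  define m where "m = card (wleaves WH)"
  define base where "base = Bc N + (N+3)*(real k - 2)"
  have m1: "m \<ge> 1" unfolding m_def using wleaves_ne[of WH] by (simp add: Suc_le_eq card_gt_0_iff)
  have "{y,z} \<subseteq> wleaves WT" using yT zT by auto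
  then have "card {y,z} \<le> k" unfolding k_def by (simp add: card_mono)
  then have k2: "k \<ge> 2" using yz' by simp
  have kmN: "real k + real m \<le> N" using bound k_def m_def by simp
  have yH: "y \<notin> wleaves WH" using disj yT by blast
  have cP: "card (wleaves P) = k + m" unfolding Pl k_def m_def
    by (rule card_Un_disjoint) (use disj in auto)
  have cP': "card (wleaves P') = (k - 1) + m" unfolding lP' lW' k_def m_def
    using disj yT by (subst card_Un_disjoint) (auto simp: card_Diff_singleton)
  have hm: "h / real m = base" unfolding hdef base_def m_def k_def using m1 m_def wleaves_ne[of WH] by simp
  define s where "s = aP / real (k+m)"
  define s' where "s' = aP / real (k - 1 + m)"
  have s0: "0 \<le> s" "s \<le> 1" unfolding s_def using aP m1 k2 by (auto simp: divide_le_eq)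
  have s'0: "0 \<le> s'" "s' \<le> 1" unfolding s'_def using aP m1 k2 by (auto simp: divide_le_eq)
  have FT: "\<And>x. x \<in> wleaves WT \<Longrightarrow> Fv aP P x = s + Fv aT WT x"
    unfolding Fv_def s_def using PT cP by (simp add: Fv_def)
  have FH: "\<And>x. x \<in> wleaves WH \<Longrightarrow> Fv aP P x = s + base + FP WH x"
    unfolding Fv_def s_def using PH cP hm m_def by simp
  have GT: "\<And>x. x \<in> wleaves WT - {y} \<Longrightarrow> Fv aP P' x = s' + Fv a' W' x"
    unfolding Fv_def s'_def using P'T cP' lW' by (simp add: Fv_def)
  have GH: "\<And>x. x \<in> wleaves WH \<Longrightarrow> Fv aP P' x = s' + base + FP WH x"
    unfolding Fv_def s'_def using P'H cP' hm m_def by simp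
  have Nk: "N - real k \<ge> 1" using kmN m1 by simp
  have i: "1 + Uc N (real k) \<le> base" unfolding Uc_def base_def using Nk by simp
  have mm: "(N+3) * real m \<ge> N + 3" using m1 kmN k2 by simp
  have ii: "base + 2 < Uc N (real (k+m))" unfolding Uc_def base_def using mm kmN
    by (simp add: algebra_simps)
  have mm2: "(N+3) * (real k + real m - 2) \<le> (N+3)*(N-2)" using kmN k2
    by (intro mult_left_mono) auto
  have iii: "Uc N (real (k+m)) < Lc N + 2" unfolding Uc_def Lc_def Bc_def using mm2 kmN
    by (simp add: algebra_simps)
  have iv: "Bc N \<le> base" unfolding base_def using k2 kmN by simp
  have v: "1 + Bc N - (N - real k) \<le> Bc N - (N - real (k+m))" using m1 by simp
  have Tlow: "\<And>x. x \<in> wleaves WT \<Longrightarrow> Fv aT WT x < base - 1"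
  proof -
    fix x assume x: "x \<in> wleaves WT"
    show "Fv aT WT x < base - 1"
    proof (cases "x \<in> {y,z}")
      case True
      then show ?thesis using yz zB Nk iv k_def by auto
    next
      case False
      then have "Fv aT WT x < Uc N (real k)" using oth x k_def by auto
      then show ?thesis using i by linarith
    qed
  qed
  have Glow: "Fv a' W' x < base - 1" if "x \<in> wleaves WT - {y,z}" for x
  proof -
    have "Fv a' W' x < Uc N (real k)" using oth that k_def by auto
    then show ?thesis using i by linarith
  qed
  have Hb': "\<And>x. x \<in> wleaves WH \<Longrightarrow> 0 \<le> FP WH x \<and> FP WH x < 1" using Hb by blast
  show ?thesis unfolding invp_def
  proof (intro conjI exI[of _ aP] exI[of _ P'])
    show "pos_lengths P" by fact
    show "y \<in> wleaves P" "z \<in> wleaves P" "y \<noteq> z" using yT zT yz' Pl by auto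
    show "real (card (wleaves P)) \<le> N" using cP kmN by simp
    show "induce_e (- {y}) aP P = Some (aP, P')" by fact
    show "wleaves P' = wleaves P - {y}" using lP' lW' Pl yH by auto
    show "inj_on (Fv aP P) (wleaves P)" unfolding Pl
    proof (rule inj_on_Un_less)
      show "inj_on (Fv aP P) (wleaves WT)" using injF FT by (rule inj_on_shift)
      show "inj_on (Fv aP P) (wleaves WH)"
        by (rule inj_on_shift[OF Hinj, of _ "s + base"]) (simp add: FH)
      fix a b assume a: "a \<in> wleaves WT" and b: "b \<in> wleaves WH"
      show "Fv aP P a < Fv aP P b" using FT[OF a] FH[OF b] Tlow[OF a] Hb'[OF b] s0 by simp
    qed
    have eqs: "wleaves P - {y} = ((wleaves WT - {y,z}) \<union> wleaves WH) \<union> {z}"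
      using Pl yH zT yz' by auto
    have Gzbig: "\<And>x. x \<in> (wleaves WT - {y,z}) \<union> wleaves WH \<Longrightarrow> Fv aP P' x < Fv aP P' z"
    proof -
      fix x assume x: "x \<in> (wleaves WT - {y,z}) \<union> wleaves WH"
      have gz: "Fv aP P' z = s' + Fv a' W' z" using GT zT yz' by simp
      show "Fv aP P' x < Fv aP P' z"
      proof (cases "x \<in> wleaves WH")
        case True
        then show ?thesis using GH Hb' gz Gz ii iii s'0 by fastforce
      next
        case False
        then have "x \<in> wleaves WT - {y,z}" using x by auto
        then show ?thesis using GT Glow gz Gz ii iii s'0 iv by fastforce
      qed
    qed
    show "inj_on (Fv aP P') (wleaves P - {y})" unfolding eqs
    proof (rule inj_on_Un_less)
      show "inj_on (Fv aP P') {z}" by simp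
      show "inj_on (Fv aP P') (wleaves WT - {y, z} \<union> wleaves WH)"
      proof (rule inj_on_Un_less)
        have "inj_on (Fv a' W') (wleaves WT - {y,z})" using injG by (rule inj_on_subset) auto
        then show "inj_on (Fv aP P') (wleaves WT - {y, z})" by (rule inj_on_shift) (simp add: GT)
        show "inj_on (Fv aP P') (wleaves WH)"
          by (rule inj_on_shift[OF Hinj, of _ "s' + base"]) (simp add: GH)
        fix a b assume a: "a \<in> wleaves WT - {y,z}" and b: "b \<in> wleaves WH"
        have "a \<in> wleaves WT - {y}" using a by auto
        then show "Fv aP P' a < Fv aP P' b" using GT GH[OF b] Glow[OF a] Hb'[OF b] s'0 by simp
      qed
      fix a b assume "a \<in> wleaves WT - {y, z} \<union> wleaves WH" "b \<in> {z}"
      then show "Fv aP P' a < Fv aP P' b" using Gzbig by auto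
    qed
    show "Fv aP P y < Fv aP P z" using FT yT zT yz by simp
    show "Fv aP P z < Bc N - (N - real (card (wleaves P)))" using FT[OF zT] zB s0 v cP k_def by simp
    show "Lc N + 2 \<le> Fv aP P' z" using GT[of z] zT yz' Gz s'0 by simp
    show "\<forall>x\<in>wleaves P - {y, z}. Bc N \<le> Fv aP P x \<and> Fv aP P x < Uc N (real (card (wleaves P))) \<and>
        Fv aP P' x < Uc N (real (card (wleaves P)))"
    proof
      fix x assume x: "x \<in> wleaves P - {y, z}"
      show "Bc N \<le> Fv aP P x \<and> Fv aP P x < Uc N (real (card (wleaves P))) \<and>
        Fv aP P' x < Uc N (real (card (wleaves P)))"
      proof (cases "x \<in> wleaves WH")
        case True
        then show ?thesis using FH GH Hb' s0 s'0 ii iv cP by fastforce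
      next
        case False
        then have xT: "x \<in> wleaves WT - {y,z}" using x Pl by auto
        then have "x \<in> wleaves WT" "x \<in> wleaves WT - {y}" by auto
        then have e1: "Fv aP P x = s + Fv aT WT x" "Fv aP P' x = s' + Fv a' W' x" using FT GT by auto
        have e2: "Bc N \<le> Fv aT WT x" "Fv aT WT x < Uc N (real k)" "Fv a' W' x < Uc N (real k)"
          using oth xT k_def by auto
        show ?thesis unfolding e1 cP using e2 s0 s'0 ii i by linarith
      qed
    qed
  qed
qed


lemma parent_left:
  assumes inv: "invp N aT WT y z" and aT: "0 < aT"
  and Hpos: "pos_lengths WH"
  and Hinj: "inj_on (FP WH) (wleaves WH)" and Hb: "\<forall>x\<in>wleaves WH. 0 \<le> FP WH x \<and> FP WH x < 1"
  and disj: "wleaves WH \<inter> wleaves WT = {}"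
  and bound: "real (card (wleaves WT) + card (wleaves WH)) \<le> N"
  and aP: "0 \<le> aP" "aP \<le> 1"
  and hdef: "h = real (card (wleaves WH)) * (Bc N + (N+3)*(real (card (wleaves WT)) - 2))"
  shows "invp N aP (WNode aT WT h WH) y z \<and> invp N aP (WNode h WH aT WT) y z"
proof -
  from inv have Tpos: "pos_lengths WT" and yT: "y \<in> wleaves WT" and zT: "z \<in> wleaves WT" and yz: "y \<noteq> z"
    unfolding invp_def by auto
  have "{y,z} \<subseteq> wleaves WT" using yT zT by auto
  then have "card {y,z} \<le> card (wleaves WT)" by (simp add: card_mono)
  then have k2: "card (wleaves WT) \<ge> 2" using yz by simp
  have m1: "card (wleaves WH) \<ge> 1" using wleaves_ne[of WH] by (simp add: Suc_le_eq card_gt_0_iff)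
  have N0: "N \<ge> 0" using bound by simp
  have Bpos: "Bc N > 0" unfolding Bc_def
  proof -
    have "(N+3)*N \<ge> 0" using N0 by simp
    then show "(N + 3) * N + 2 * N + 7 > 0" using N0 by linarith
  qed
  have "(N+3)*(real (card (wleaves WT)) - 2) \<ge> 0" using k2 N0 by simp
  then have hpos: "h > 0" unfolding hdef using m1 Bpos by (intro mult_pos_pos) auto
  have yH: "y \<notin> wleaves WH" using disj yT by blast
  have indH: "induce_e (-{y}) h WH = Some (h, WH)" using yH by (intro induce_e_all) auto
  show ?thesis
  proof
    show "invp N aP (WNode aT WT h WH) y z"
    proof (rule parent_generic[OF inv Hinj Hb disj bound aP hdef])
      show "pos_lengths (WNode aT WT h WH)" using Tpos Hpos aT hpos by simp
      show "wleaves (WNode aT WT h WH) = wleaves WT \<union> wleaves WH" by simp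
      show "\<And>x. x \<in> wleaves WT \<Longrightarrow> FP (WNode aT WT h WH) x = Fv aT WT x" by (simp add: Fv_def)
      show "\<And>x. x \<in> wleaves WH \<Longrightarrow> FP (WNode aT WT h WH) x = h / real (card (wleaves WH)) + FP WH x"
        using disj by auto
      fix a' W' assume ind: "induce_e (- {y}) aT WT = Some (a', W')" and lW': "wleaves W' = wleaves WT - {y}"
      show "\<exists>P'. induce_e (- {y}) aP (WNode aT WT h WH) = Some (aP, P') \<and>
             wleaves P' = wleaves W' \<union> wleaves WH \<and>
             (\<forall>x\<in>wleaves W'. FP P' x = Fv a' W' x) \<and>
             (\<forall>x\<in>wleaves WH. FP P' x = h / real (card (wleaves WH)) + FP WH x)"
        apply (rule exI[of _ "WNode a' W' h WH"])
        using ind indH lW' disj by (auto simp: Fv_def)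
    qed
    show "invp N aP (WNode h WH aT WT) y z"
    proof (rule parent_generic[OF inv Hinj Hb disj bound aP hdef])
      show "pos_lengths (WNode h WH aT WT)" using Tpos Hpos aT hpos by simp
      show "wleaves (WNode h WH aT WT) = wleaves WT \<union> wleaves WH" by auto
      show "\<And>x. x \<in> wleaves WT \<Longrightarrow> FP (WNode h WH aT WT) x = Fv aT WT x" using disj by (auto simp: Fv_def)
      show "\<And>x. x \<in> wleaves WH \<Longrightarrow> FP (WNode h WH aT WT) x = h / real (card (wleaves WH)) + FP WH x"
        by auto
      fix a' W' assume ind: "induce_e (- {y}) aT WT = Some (a', W')" and lW': "wleaves W' = wleaves WT - {y}"
      show "\<exists>P'. induce_e (- {y}) aP (WNode h WH aT WT) = Some (aP, P') \<and>
             wleaves P' = wleaves W' \<union> wleaves WH \<and>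
             (\<forall>x\<in>wleaves W'. FP P' x = Fv a' W' x) \<and>
             (\<forall>x\<in>wleaves WH. FP P' x = h / real (card (wleaves WH)) + FP WH x)"
        apply (rule exI[of _ "WNode h WH a' W'"])
        using ind indH lW' disj by (auto simp: Fv_def)
    qed
  qed
qed

lemma length_tleaves_pos: "length (tleaves S) \<ge> 1"
  by (induction S) auto

lemma main:
  assumes "distinct (tleaves S)" "2 \<le> length (tleaves S)" "real (length (tleaves S)) \<le> N"
  shows "\<exists>W a y z. shape W = S \<and> 0 < a \<and> invp N a W y z"
  using assms
proof (induction S)
  case (Leaf x)
  then show ?case by simp
next
  case (Node l r)
  have dl: "distinct (tleaves l)" and dr: "distinct (tleaves r)"
    and disj: "set (tleaves l) \<inter> set (tleaves r) = {}" using Node.prems by auto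
  have N2: "N \<ge> 2" using Node.prems by linarith
  have lenl: "length (tleaves l) \<ge> 1" "length (tleaves r) \<ge> 1" by (rule length_tleaves_pos)+
  show ?case
  proof (cases l)
    case (Leaf u)
    note lu = Leaf
    show ?thesis
    proof (cases r)
      case (Leaf v)
      have uv: "u \<noteq> v" using Node.prems lu Leaf by auto
      have Lp: "Lc N > 0" unfolding Lc_def Bc_def
      proof -
        have h1: "0 \<le> N * (N * 2)" "0 \<le> N*8" using N2 by auto
        show "2 * ((N + 3) * N + 2 * N + 7) - 2 * N - 6 > 0"
          apply (simp add: algebra_simps) using h1 by linarith
      qed
      show ?thesis
        apply (rule exI[of _ "WNode 1 (WLeaf u) 2 (WLeaf v)"], rule exI[of _ "Lc N"],
               rule exI[of _ u], rule exI[of _ v])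
        using cherry[OF uv N2] Lp lu Leaf by simp
    next
      case (Node r1 r2)
      have r2: "2 \<le> length (tleaves r)" using Node length_tleaves_pos[of r1] length_tleaves_pos[of r2] by simp
      have rN: "real (length (tleaves r)) \<le> N" using Node.prems(3) by simp
      obtain WT aT y z where WT: "shape WT = r" "0 < aT" "invp N aT WT y z"
        using Node.IH(2)[OF dr r2 rN] by blast
      define WH where "WH = (WLeaf u :: 'a wtree)"
      define h where "h = real (card (wleaves WH)) * (Bc N + (N+3)*(real (card (wleaves WT)) - 2))"
      have cT: "card (wleaves WT) = length (tleaves r)" using card_wleaves[of WT] WT(1) dr by simp
      have dj: "wleaves WH \<inter> wleaves WT = {}" using disj lu WT(1) set_tleaves_shape[of WT] WH_def by auto
      have bd: "real (card (wleaves WT) + card (wleaves WH)) \<le> N"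
        using Node.prems(3) cT lu WH_def by simp
      have "invp N 1 (WNode h WH aT WT) y z"
        using parent_left[OF WT(3) WT(2) _ _ _ dj bd _ _ h_def] WH_def by (simp add: inj_on_def)
      then show ?thesis
        by (intro exI[of _ "WNode h WH aT WT"] exI[of _ "1::real"] exI[of _ y] exI[of _ z])
           (simp add: WH_def lu WT(1))
    qed
  next
    case (Node l1 l2)
    have l2: "2 \<le> length (tleaves l)" using Node length_tleaves_pos[of l1] length_tleaves_pos[of l2] by simp
    have lN: "real (length (tleaves l)) \<le> N" using Node.prems(3) by simp
    obtain WT aT y z where WT: "shape WT = l" "0 < aT" "invp N aT WT y z"
      using Node.IH(1)[OF dl l2 lN] by blast
    obtain WH where WH: "shape WH = r" "pos_lengths WH" "inj_on (FP WH) (wleaves WH)"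
       "\<forall>x\<in>wleaves WH. 0 \<le> FP WH x \<and> FP WH x < 1"
      using eps_weights[OF dr, of 1] by auto
    define h where "h = real (card (wleaves WH)) * (Bc N + (N+3)*(real (card (wleaves WT)) - 2))"
    have cT: "card (wleaves WT) = length (tleaves l)" using card_wleaves[of WT] WT(1) dl by simp
    have cH: "card (wleaves WH) = length (tleaves r)" using card_wleaves[of WH] WH(1) dr by simp
    have dj: "wleaves WH \<inter> wleaves WT = {}" using disj WT(1) WH(1) set_tleaves_shape[of WT] set_tleaves_shape[of WH] by auto
    have bd: "real (card (wleaves WT) + card (wleaves WH)) \<le> N"
      using Node.prems(3) cT cH by simp
    have "invp N 1 (WNode aT WT h WH) y z"
      using parent_left[OF WT(3) WT(2) WH(2) WH(3) WH(4) dj bd _ _ h_def] by simp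
    then show ?thesis
      by (intro exI[of _ "WNode aT WT h WH"] exI[of _ "1::real"] exI[of _ y] exI[of _ z])
         (simp add: WH(1) WT(1))
  qed
qed


theorem theorem3:
  fixes T :: "'a tree"
  assumes "distinct (tleaves T)"
    and "length (tleaves T) \<ge> 2"
  shows "\<exists>W. shape W = T \<and> pos_lengths W \<and>
           inj_on (FP W) (wleaves W) \<and>
           (\<exists>y \<in> wleaves W. (\<forall>x \<in> wleaves W - {y}. FP W y < FP W x) \<and>
              (\<exists>Wt. induce (wleaves W - {y}) W = Some Wt \<and>
                    inj_on (FP Wt) (wleaves W - {y}) \<and>
                    (\<exists>z \<in> wleaves W - {y}.
                        (\<forall>x \<in> wleaves W - {y, z}. FP W z < FP W x) \<and>
                        (\<forall>x \<in> wleaves W - {y, z}. FP Wt x < FP Wt z))))"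
proof -
  define N where "N = real (length (tleaves T))"
  obtain W a y z where W: "shape W = T" "0 < a" "invp N a W y z"
    using main[OF assms, of N] N_def by auto
  have cW: "real (card (wleaves W)) = N" using card_wleaves[of W] W(1) assms(1) N_def by simp
  have N2: "N \<ge> 2" using assms(2) N_def by simp
  from W(3) obtain a' W' where pos: "pos_lengths W" and yW: "y \<in> wleaves W" and zW: "z \<in> wleaves W"
    and yz: "y \<noteq> z"
    and ind: "induce_e (-{y}) a W = Some (a', W')" and lW': "wleaves W' = wleaves W - {y}"
    and injF: "inj_on (Fv a W) (wleaves W)" and injG: "inj_on (Fv a' W') (wleaves W - {y})"
    and Fyz: "Fv a W y < Fv a W z" and Fz: "Fv a W z < Bc N - (N - real (card (wleaves W)))"
    and Gz: "Lc N + 2 \<le> Fv a' W' z"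
    and oth: "\<forall>x \<in> wleaves W - {y,z}. Bc N \<le> Fv a W x \<and> Fv a W x < Uc N (real (card (wleaves W))) \<and>
        Fv a' W' x < Uc N (real (card (wleaves W)))"
    unfolding invp_def by blast
  have UL: "Uc N N < Lc N + 2" unfolding Uc_def Lc_def Bc_def using N2 by (simp add: algebra_simps)
  define c where "c = a / real (card (wleaves W))"
  define c' where "c' = a' / real (card (wleaves W'))"
  have FW: "\<And>x. FP W x = Fv a W x - c" unfolding Fv_def c_def by simp
  have FW': "\<And>x. FP W' x = Fv a' W' x - c'" unfolding Fv_def c'_def by simp
  have ind0: "induce_e (-{y}) 0 W = Some (a' - a, W')"
    using ind induce_e_shift[of "-{y}" a W] by (cases "induce_e (-{y}) 0 W") auto
  have indW: "induce (wleaves W - {y}) W = Some W'"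
  proof -
    have "induce_e (wleaves W - {y}) 0 W = induce_e (-{y}) 0 W" by (rule induce_e_cong) auto
    then show ?thesis unfolding induce_def using ind0 by simp
  qed
  have inj1: "inj_on (FP W) (wleaves W)" by (rule inj_on_shift[OF injF, of _ "-c"]) (simp add: FW)
  have inj2: "inj_on (FP W') (wleaves W - {y})" by (rule inj_on_shift[OF injG, of _ "-c'"]) (simp add: FW')
  have zy: "z \<in> wleaves W - {y}" using zW yz by simp
  have P1: "\<forall>x\<in>wleaves W - {y}. FP W y < FP W x"
  proof
    fix x assume x: "x \<in> wleaves W - {y}"
    show "FP W y < FP W x"
    proof (cases "x = z")
      case True then show ?thesis using Fyz FW by simp
    next
      case False
      then have "Bc N \<le> Fv a W x" using oth x by auto
      then show ?thesis using Fyz Fz cW FW by simp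
    qed
  qed
  have P2: "\<forall>x\<in>wleaves W - {y, z}. FP W z < FP W x"
  proof
    fix x assume x: "x \<in> wleaves W - {y, z}"
    have "Bc N \<le> Fv a W x" using oth x by auto
    then show "FP W z < FP W x" using Fz cW FW by simp
  qed
  have P3: "\<forall>x\<in>wleaves W - {y, z}. FP W' x < FP W' z"
  proof
    fix x assume x: "x \<in> wleaves W - {y, z}"
    have "Fv a' W' x < Uc N N" using oth x cW by auto
    then show "FP W' x < FP W' z" using Gz UL FW' by simp
  qed
  show ?thesis using W(1) pos inj1 inj2 zy P1 P2 P3 indW yW by blast
qed

end
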